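(* Let $M\in S_d^+$, let $\mathcal T$ be an $M$-reduced mesh and $\Lambda$ the associated Hopf–Lax operator. Then the map $D_M:\mathbb Z^d\to\mathbb R_+$, $D_M(z)=\|z\|_M$, is a discrete sub-solution, i.e. $D_M(0)=0$ and $D_M(z)\le\Lambda(D_M,z)$ for all $z\in\mathbb Z^d\setminus\{0\}$.
   Context: $S_d^+$ is the set of $d\times d$ symmetric positive definite matrices; $\langle u,v\rangle_M:=u^TMv$, $\|u\|_M:=\sqrt{\langle u,u\rangle_M}$. An $M$-reduced mesh is a finite conforming mesh $\mathcal T$ of simplices in $\mathbb R^d$ such that: (I) the union of its simplices is a neighborhood of the origin; (II) the vertices of each $T\in\mathcal T$ lie in $\mathbb Z^d$ and $T$ has volume $1/d!$; (III) each $T\in\mathcal T$ has the origin as a vertex, and its other vertices $v_1,\dots,v_d$ satisfy $\langle v_i,v_j\rangle_M\ge0$ for all $i,j$. For $\delta:\mathbb Z^d\to\mathbb R_+\cup\{\infty\}$ and $z\in\mathbb Z^d$, $\Lambda(\delta,z):=\min\{\|\sum_{i=1}^k\alpha_iv_i\|_M+\sum_{i=1}^k\alpha_i\delta(z+v_i)\}$ over $1\le k\le d$, $\alpha_i\ge0$ with $\sum_i\alpha_i=1$, and non-zero vertices $v_1,\dots,v_k$ of a common simplex of $\mathcal T$ (convention $0\times\infty=0$). *)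

theory Defs
  imports "HOL-Analysis.Analysis"
begin

definition rvec :: "int^'n \<Rightarrow> real^'n" where
  "rvec v = (\<chi> i. real_of_int (v $ i))"

definition sym_pos_def :: "real^'n^'n \<Rightarrow> bool" where
  "sym_pos_def M \<longleftrightarrow> transpose M = M \<and> (\<forall>x. x \<noteq> 0 \<longrightarrow> x \<bullet> (M *v x) > 0)"

definition innerM :: "real^'n^'n \<Rightarrow> real^'n \<Rightarrow> real^'n \<Rightarrow> real" where
  "innerM M u v = u \<bullet> (M *v v)"

definition normM :: "real^'n^'n \<Rightarrow> real^'n \<Rightarrow> real" where
  "normM M u = sqrt (innerM M u u)"

text \<open>A simplex is represented by its (finite) vertex set; the mesh is a finite set of simplices.\<close>
definition reduced_mesh :: "real^'n^'n \<Rightarrow> (int^'n) set set \<Rightarrow> bool" where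
  "reduced_mesh M \<T> \<longleftrightarrow>
     finite \<T> \<and>
     \<comment> \<open>conforming: two simplices meet in their common face\<close>
     (\<forall>T1\<in>\<T>. \<forall>T2\<in>\<T>.
        convex hull (rvec ` T1) \<inter> convex hull (rvec ` T2) = convex hull (rvec ` (T1 \<inter> T2))) \<and>
     \<comment> \<open>(I) neighborhood of the origin\<close>
     0 \<in> interior (\<Union>T\<in>\<T>. convex hull (rvec ` T)) \<and>
     (\<forall>T\<in>\<T>.
        \<comment> \<open>simplex with d+1 integer vertices and volume 1/d! (II)\<close>
        finite T \<and> card T = CARD('n) + 1 \<and>
        measure lebesgue (convex hull (rvec ` T)) = 1 / fact CARD('n) \<and>
        \<comment> \<open>(III)\<close>
        0 \<in> T \<and>
        (\<forall>u\<in>T - {0}. \<forall>v\<in>T - {0}. innerM M (rvec u) (rvec v) \<ge> 0))"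

text \<open>Hopf-Lax operator; delta takes values in [0,\<infinity>] (ereal, where 0 * \<infinity> = 0).\<close>
definition hopf_lax :: "real^'n^'n \<Rightarrow> (int^'n) set set \<Rightarrow> (int^'n \<Rightarrow> ereal) \<Rightarrow> int^'n \<Rightarrow> ereal" where
  "hopf_lax M \<T> \<delta> z = Inf
     { ereal (normM M (\<Sum>v\<in>S. \<alpha> v *\<^sub>R rvec v)) + (\<Sum>v\<in>S. ereal (\<alpha> v) * \<delta> (z + v))
       | S \<alpha>. (\<exists>T\<in>\<T>. S \<subseteq> T - {0}) \<and> S \<noteq> {} \<and> card S \<le> CARD('n) \<and>
               (\<forall>v\<in>S. \<alpha> v \<ge> 0) \<and> sum \<alpha> S = 1 }"

end

theory Submission
  imports Defs
begin

lemma iM_add: "innerM M u (v + w) = innerM M u v + innerM M u w"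
  by (simp add: innerM_def matrix_vector_right_distrib inner_add_right)
lemma iM_add1: "innerM M (u + w) v = innerM M u v + innerM M w v"
  by (simp add: innerM_def inner_add_left)
lemma iM_scale: "innerM M u (c *\<^sub>R v) = c * innerM M u v"
  by (simp add: innerM_def matrix_vector_mult_scaleR)
lemma iM_scale1: "innerM M (c *\<^sub>R u) v = c * innerM M u v"
  by (simp add: innerM_def)

lemma iM_sym: assumes "sym_pos_def M" shows "innerM M u v = innerM M v u"
proof -
  have "transpose M = M" using assms by (simp add: sym_pos_def_def)
  then show ?thesis unfolding innerM_def
    by (metis dot_lmul_matrix inner_commute vector_transpose_matrix)
qed

lemma iM_nonneg: assumes "sym_pos_def M" shows "innerM M u u \<ge> 0"
  using assms unfolding sym_pos_def_def innerM_def
  by (cases "u = 0") (auto intro: less_imp_le)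

lemma iM_CS: assumes "sym_pos_def M"
  shows "(innerM M u v)^2 \<le> innerM M u u * innerM M v v"
proof -
  let ?B = "innerM M u v" let ?a = "innerM M u u" let ?c = "innerM M v v"
  have q: "\<And>t. 0 \<le> ?a + 2 * t * ?B + t^2 * ?c"
  proof -
    fix t
    have "0 \<le> innerM M (u + t *\<^sub>R v) (u + t *\<^sub>R v)" by (rule iM_nonneg[OF assms])
    also have "\<dots> = ?a + 2 * t * ?B + t^2 * ?c"
      using iM_sym[OF assms, of v u]
      by (simp add: iM_add iM_add1 iM_scale iM_scale1 power2_eq_square algebra_simps)
    finally show "0 \<le> ?a + 2 * t * ?B + t^2 * ?c" .
  qed
  have c0: "?c \<ge> 0" by (rule iM_nonneg[OF assms])
  show ?thesis
  proof (cases "?c = 0")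
    case True
    have "?B = 0"
    proof (rule ccontr)
      assume "?B \<noteq> 0"
      have "0 \<le> ?a + 2 * (-(?a + 1) / (2 * ?B)) * ?B" using q[of "-(?a+1)/(2*?B)"] True by simp
      also have "\<dots> = -1" using \<open>?B \<noteq> 0\<close> by (simp add: field_simps)
      finally show False by simp
    qed
    then show ?thesis by (simp add: True)
  next
    case False
    hence cp: "?c > 0" using c0 by simp
    have "0 \<le> ?a + 2 * (-?B/?c) * ?B + (-?B/?c)^2 * ?c" by (rule q)
    also have "\<dots> = ?a - ?B^2 / ?c" using cp by (simp add: field_simps power2_eq_square)
    finally have "?B^2 / ?c \<le> ?a" by simp
    then show ?thesis using cp by (simp add: field_simps mult.commute)
  qed
qed

lemma nM_tri: assumes "sym_pos_def M"
  shows "normM M (u + v) \<le> normM M u + normM M v"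
proof -
  let ?B = "innerM M u v" let ?a = "innerM M u u" let ?c = "innerM M v v"
  have a0: "?a \<ge> 0" and c0: "?c \<ge> 0" using iM_nonneg[OF assms] by auto
  have "?B \<le> sqrt (?a * ?c)"
  proof -
    have "\<bar>?B\<bar> = sqrt (?B^2)" by simp
    also have "\<dots> \<le> sqrt (?a * ?c)" using iM_CS[OF assms, of u v] by (rule real_sqrt_le_mono)
    finally show ?thesis by simp
  qed
  hence B: "?B \<le> sqrt ?a * sqrt ?c" by (simp add: real_sqrt_mult)
  have e: "innerM M (u+v) (u+v) = ?a + 2 * ?B + ?c"
    using iM_sym[OF assms, of v u] by (simp add: iM_add iM_add1)
  have "innerM M (u+v) (u+v) \<le> (sqrt ?a + sqrt ?c)^2"
    using e B a0 c0 by (simp add: power2_eq_square algebra_simps)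
  hence "sqrt (innerM M (u+v) (u+v)) \<le> sqrt ((sqrt ?a + sqrt ?c)^2)" by (rule real_sqrt_le_mono)
  thus ?thesis unfolding normM_def using a0 c0 by simp
qed

lemma nM_scale: "normM M (c *\<^sub>R u) = \<bar>c\<bar> * normM M u"
proof -
  have "innerM M (c *\<^sub>R u) (c *\<^sub>R u) = c^2 * innerM M u u"
    by (simp add: iM_scale iM_scale1 power2_eq_square)
  thus ?thesis unfolding normM_def by (simp add: real_sqrt_mult)
qed

lemma nM_sum: assumes "sym_pos_def M"
  shows "normM M (\<Sum>x\<in>S. f x) \<le> (\<Sum>x\<in>S. normM M (f x))"
proof (induction S rule: infinite_finite_induct)
  case (infinite A) thus ?case by (simp add: normM_def innerM_def)
next
  case empty thus ?case by (simp add: normM_def innerM_def)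
next
  case (insert x F)
  thus ?case using nM_tri[OF assms, of "f x" "sum f F"] by simp
qed

lemma rvec_add: "rvec (a + b) = rvec a + rvec b"
  by (simp add: rvec_def vec_eq_iff)

theorem proposition1p2:
  fixes M :: "real^'n^'n" and \<T> :: "(int^'n) set set"
  assumes "sym_pos_def M"
    and "reduced_mesh M \<T>"
  shows "normM M (rvec 0) = 0 \<and>
         (\<forall>z. z \<noteq> 0 \<longrightarrow>
            ereal (normM M (rvec z)) \<le> hopf_lax M \<T> (\<lambda>y. ereal (normM M (rvec y))) z)"
proof (intro conjI allI impI)
  show "normM M (rvec 0) = 0" proof - have "rvec (0::int^'n) = 0" by (simp add: rvec_def vec_eq_iff) thus ?thesis by (simp add: normM_def innerM_def) qed
next
  fix z :: "int^'n"
  let ?N = "normM M"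
  show "ereal (?N (rvec z)) \<le> hopf_lax M \<T> (\<lambda>y. ereal (?N (rvec y))) z"
    unfolding hopf_lax_def
  proof (rule Inf_greatest, clarify)
    fix S and \<alpha> :: "int^'n \<Rightarrow> real"
    assume a: "\<forall>v\<in>S. 0 \<le> \<alpha> v" "sum \<alpha> S = 1"
    have fin: "finite S" using a(2) by (metis sum.infinite zero_neq_one)
    have eq: "(\<Sum>v\<in>S. ereal (\<alpha> v) * ereal (?N (rvec (z + v))))
              = ereal (\<Sum>v\<in>S. \<alpha> v * ?N (rvec (z + v)))"
      by (simp add: sum_ereal)
    have dec: "rvec z = (\<Sum>v\<in>S. \<alpha> v *\<^sub>R rvec (z + v)) + (- 1) *\<^sub>R (\<Sum>v\<in>S. \<alpha> v *\<^sub>R rvec v)"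
    proof -
      have "(\<Sum>v\<in>S. \<alpha> v *\<^sub>R rvec (z + v)) = (\<Sum>v\<in>S. \<alpha> v *\<^sub>R rvec z) + (\<Sum>v\<in>S. \<alpha> v *\<^sub>R rvec v)"
        by (simp add: rvec_add scaleR_add_right sum.distrib)
      also have "(\<Sum>v\<in>S. \<alpha> v *\<^sub>R rvec z) = rvec z"
        using a(2) by (simp add: scaleR_sum_left[symmetric])
      finally show ?thesis by simp
    qed
    have "?N (rvec z) \<le> ?N (\<Sum>v\<in>S. \<alpha> v *\<^sub>R rvec (z + v)) + ?N (\<Sum>v\<in>S. \<alpha> v *\<^sub>R rvec v)"
      using nM_tri[OF assms(1), of "\<Sum>v\<in>S. \<alpha> v *\<^sub>R rvec (z + v)" "(- 1) *\<^sub>R (\<Sum>v\<in>S. \<alpha> v *\<^sub>R rvec v)"]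
        nM_scale[of M "-1" "\<Sum>v\<in>S. \<alpha> v *\<^sub>R rvec v"] dec by simp
    also have "?N (\<Sum>v\<in>S. \<alpha> v *\<^sub>R rvec (z + v)) \<le> (\<Sum>v\<in>S. ?N (\<alpha> v *\<^sub>R rvec (z + v)))"
      by (rule nM_sum[OF assms(1)])
    also have "(\<Sum>v\<in>S. ?N (\<alpha> v *\<^sub>R rvec (z + v))) = (\<Sum>v\<in>S. \<alpha> v * ?N (rvec (z + v)))"
      using a(1) by (intro sum.cong) (auto simp: nM_scale)
    finally show "ereal (?N (rvec z)) \<le> ereal (?N (\<Sum>v\<in>S. \<alpha> v *\<^sub>R rvec v)) +
        (\<Sum>v\<in>S. ereal (\<alpha> v) * ereal (?N (rvec (z + v))))"
      unfolding eq by simp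
  qed
qed

end
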